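(* (Working in $\mathbf{ZF}$.) Let $X$ be a generalized topological space and let $(\alpha X,\alpha)$ be a compactification of the topologization $X_{top}$ of $X$, with topology $\tau_{\alpha X}$. Let $\mathrm{Op}^S_{\alpha X}=\{V\in\tau_{\alpha X}:\alpha^{-1}(V)\in\mathrm{Op}_X\}$ and $\mathrm{Cov}^S_{\alpha X}=\{\mathcal V\subseteq\mathrm{Op}^S_{\alpha X}:\{\alpha^{-1}(V):V\in\mathcal V\}\in\mathrm{Cov}_X\}$, and let $\alpha^S X$ denote $((\alpha X,\mathrm{Op}^S_{\alpha X},\mathrm{Cov}^S_{\alpha X}),\alpha)$. Then: (i) $\alpha^S X$ is a strict compactification of the gts $X$; (ii) if the topology $\tau(\mathrm{Op}^S_{\alpha X})$ generated by $\mathrm{Op}^S_{\alpha X}$ is Hausdorff, then $\tau_{\alpha X}=\tau(\mathrm{Op}^S_{\alpha X})$; (iii) if $\alpha(X)\in\tau_{\alpha X}$, then the remainder $Y=\alpha X\setminus\alpha(X)$, as a subspace of the gts $(\alpha X,\mathrm{Op}^S_{\alpha X},\mathrm{Cov}^S_{\alpha X})$, is a topological gts.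
   Context: A generalized topological space (gts) $(X,\mathrm{Op}_X,\mathrm{Cov}_X)$ is in the sense of Delfs–Knebusch: $\mathrm{Op}_X\subseteq\mathcal P(X)$, $\mathrm{Cov}_X\subseteq\mathcal P(\mathrm{Op}_X)$ with (A1) $\emptyset,X$ open; (A2) finite unions/intersections of open sets open; (A3) finite families of open sets admissible (i.e. in $\mathrm{Cov}_X$); (A4) unions of admissible families open; (A5) traces of an admissible family on an open subset of its union are admissible; (A6) admissible refinements of members of an admissible family combine to an admissible family; (A7) an open family with the same union as an admissible $\mathcal U$ and coarser than $\mathcal U$ is admissible; (A8) a subset of the union of an admissible $\mathcal U$ whose traces on all members of $\mathcal U$ are open is open. A generalized topology in a set $Z$ is a $\mathrm{Cov}$ with $(Z,\bigcup\mathrm{Cov},\mathrm{Cov})$ a gts; $\langle\mathcal A\rangle_Z$ is the smallest generalized topology in $Z$ containing $\mathcal A$. $X_{top}$ is $X$ with the topology generated by $\mathrm{Op}_X$; weakly Hausdorff/topologically compact means $X_{top}$ is Hausdorff/compact. A compactification of a topological space $T$ is a pair $(\alpha T,\alpha)$ where $\alpha T$ is a compact topological space and $\alpha:T\to\alpha T$ is a homeomorphic embedding with dense image. For $Y\subseteq X$ and a collection $\mathcal A$ of families, $\mathcal A\cap_2Y=\{\{Y\cap U:U\in\mathcal U\}:\mathcal U\in\mathcal A\}$; the subspace $Y$ of a gts $X$ is $(Y,\langle\mathrm{Cov}_X\cap_2Y\rangle_Y)$. A gts is topological if its $\mathrm{Cov}$ consists of all families of open sets. A map $f:X\to Z$ of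 gtses is strictly continuous if $\{f^{-1}(V):V\in\mathcal V\}\in\mathrm{Cov}_X$ for all $\mathcal V\in\mathrm{Cov}_Z$; it is a strict embedding if it is a strictly continuous injection with $\{\{f(U):U\in\mathcal U\}:\mathcal U\in\mathrm{Cov}_X\}\subseteq\mathrm{Cov}_Z\cap_2f(X)$. A strict compactification of a gts $X$ is a pair $(\alpha X,\alpha)$ with $\alpha X$ a topologically compact gts and $\alpha:X\to\alpha X$ a strict embedding such that $\alpha(X)$ is dense in $(\alpha X)_{top}$. *)

theory Defs
  imports "HOL-Analysis.Analysis"
begin

text \<open>Generalized topological spaces (Delfs--Knebusch). A gts is represented by
  its carrier X, its family Op of open sets and its family Cov of admissible
  families of open sets.\<close>

definition gts :: "'a set \<Rightarrow> 'a set set \<Rightarrow> 'a set set set \<Rightarrow> bool" where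
  "gts X Op Cov \<longleftrightarrow>
     Op \<subseteq> Pow X \<and> Cov \<subseteq> Pow Op \<and>
     \<comment> \<open>(A1)\<close>
     {} \<in> Op \<and> X \<in> Op \<and>
     \<comment> \<open>(A2)\<close>
     (\<forall>U\<in>Op. \<forall>V\<in>Op. U \<union> V \<in> Op \<and> U \<inter> V \<in> Op) \<and>
     \<comment> \<open>(A3)\<close>
     (\<forall>\<U>. finite \<U> \<and> \<U> \<subseteq> Op \<longrightarrow> \<U> \<in> Cov) \<and>
     \<comment> \<open>(A4)\<close>
     (\<forall>\<U>\<in>Cov. \<Union>\<U> \<in> Op) \<and>
     \<comment> \<open>(A5)\<close>
     (\<forall>\<U>\<in>Cov. \<forall>V\<in>Op. V \<subseteq> \<Union>\<U> \<longrightarrow> (\<lambda>U. V \<inter> U) ` \<U> \<in> Cov) \<and>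
     \<comment> \<open>(A6)\<close>
     (\<forall>\<U>\<in>Cov. \<forall>\<V>. (\<forall>U\<in>\<U>. \<V> U \<in> Cov \<and> \<Union>(\<V> U) = U) \<longrightarrow> \<Union>(\<V> ` \<U>) \<in> Cov) \<and>
     \<comment> \<open>(A7)\<close>
     (\<forall>\<U>\<in>Cov. \<forall>\<V>. \<V> \<subseteq> Op \<and> \<Union>\<V> = \<Union>\<U> \<and> (\<forall>U\<in>\<U>. \<exists>V\<in>\<V>. U \<subseteq> V) \<longrightarrow> \<V> \<in> Cov) \<and>
     \<comment> \<open>(A8)\<close>
     (\<forall>\<U>\<in>Cov. \<forall>W. W \<subseteq> \<Union>\<U> \<and> (\<forall>U\<in>\<U>. W \<inter> U \<in> Op) \<longrightarrow> W \<in> Op)"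

definition gen_topology_in :: "'a set \<Rightarrow> 'a set set set \<Rightarrow> bool" where
  "gen_topology_in Z Cov \<longleftrightarrow> gts Z (\<Union>Cov) Cov"

definition gen_topology_generated :: "'a set \<Rightarrow> 'a set set set \<Rightarrow> 'a set set set" where
  "gen_topology_generated Z \<A> = \<Inter>{Cov. gen_topology_in Z Cov \<and> \<A> \<subseteq> Cov}"

definition gts_top :: "'a set set \<Rightarrow> 'a topology" where
  "gts_top Op = topology_generated_by Op"

definition topologically_compact :: "'a set set \<Rightarrow> bool" where
  "topologically_compact Op \<longleftrightarrow> compact_space (gts_top Op)"

definition weakly_Hausdorff :: "'a set set \<Rightarrow> bool" where
  "weakly_Hausdorff Op \<longleftrightarrow> Hausdorff_space (gts_top Op)"

definition cap2 :: "'a set set set \<Rightarrow> 'a set \<Rightarrow> 'a set set set" where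
  "cap2 \<A> Y = (\<lambda>\<U>. (\<lambda>U. Y \<inter> U) ` \<U>) ` \<A>"

definition subspace_Cov :: "'a set set set \<Rightarrow> 'a set \<Rightarrow> 'a set set set" where
  "subspace_Cov Cov Y = gen_topology_generated Y (cap2 Cov Y)"

definition subspace_Op :: "'a set set set \<Rightarrow> 'a set \<Rightarrow> 'a set set" where
  "subspace_Op Cov Y = \<Union>(subspace_Cov Cov Y)"

definition topological_gts :: "'a set \<Rightarrow> 'a set set \<Rightarrow> 'a set set set \<Rightarrow> bool" where
  "topological_gts X Op Cov \<longleftrightarrow> gts X Op Cov \<and> Cov = Pow Op"

definition strictly_continuous ::
  "'a set \<Rightarrow> 'a set set \<Rightarrow> 'a set set set \<Rightarrow> 'b set \<Rightarrow> 'b set set \<Rightarrow> 'b set set set \<Rightarrow> ('a \<Rightarrow> 'b) \<Rightarrow> bool" where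
  "strictly_continuous X OpX CovX Z OpZ CovZ f \<longleftrightarrow>
     f ` X \<subseteq> Z \<and> (\<forall>\<V>\<in>CovZ. (\<lambda>V. f -` V \<inter> X) ` \<V> \<in> CovX)"

definition strict_embedding ::
  "'a set \<Rightarrow> 'a set set \<Rightarrow> 'a set set set \<Rightarrow> 'b set \<Rightarrow> 'b set set \<Rightarrow> 'b set set set \<Rightarrow> ('a \<Rightarrow> 'b) \<Rightarrow> bool" where
  "strict_embedding X OpX CovX Z OpZ CovZ f \<longleftrightarrow>
     strictly_continuous X OpX CovX Z OpZ CovZ f \<and> inj_on f X \<and>
     (\<lambda>\<U>. (\<lambda>U. f ` U) ` \<U>) ` CovX \<subseteq> cap2 CovZ (f ` X)"

definition strict_compactification ::
  "'a set \<Rightarrow> 'a set set \<Rightarrow> 'a set set set \<Rightarrow> 'b set \<Rightarrow> 'b set set \<Rightarrow> 'b set set set \<Rightarrow> ('a \<Rightarrow> 'b) \<Rightarrow> bool" where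
  "strict_compactification X OpX CovX Z OpZ CovZ f \<longleftrightarrow>
     gts Z OpZ CovZ \<and> topologically_compact OpZ \<and>
     strict_embedding X OpX CovX Z OpZ CovZ f \<and>
     (gts_top OpZ) closure_of (f ` X) = Z"

definition compactification :: "'a topology \<Rightarrow> 'b topology \<Rightarrow> ('a \<Rightarrow> 'b) \<Rightarrow> bool" where
  "compactification T K f \<longleftrightarrow>
     compact_space K \<and> embedding_map T K f \<and> K closure_of (f ` topspace T) = topspace K"

end

theory Submission
  imports Defs
begin


lemma gtsS:
  assumes gtsX: "gts X OpX CovX"
    and img: "\<alpha> ` X \<subseteq> topspace K"
    and OpS_def: "OpS = {V. openin K V \<and> \<alpha> -` V \<inter> X \<in> OpX}"
    and CovS_def: "CovS = {\<V>. \<V> \<subseteq> OpS \<and> (\<lambda>V. \<alpha> -` V \<inter> X) ` \<V> \<in> CovX}"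
  shows "gts (topspace K) OpS CovS"
proof -
  note G = gtsX[unfolded gts_def]
  have GOp: "OpX \<subseteq> Pow X" using G by (elim conjE) assumption
  have GE: "{} \<in> OpX" using G by (elim conjE) assumption
  have GX: "X \<in> OpX" using G by (elim conjE) assumption
  have G2: "\<forall>U\<in>OpX. \<forall>V\<in>OpX. U \<union> V \<in> OpX \<and> U \<inter> V \<in> OpX" using G by (elim conjE) assumption
  have G3: "\<forall>\<U>. finite \<U> \<and> \<U> \<subseteq> OpX \<longrightarrow> \<U> \<in> CovX" using G by (elim conjE) assumption
  have G4: "\<forall>\<U>\<in>CovX. \<Union>\<U> \<in> OpX" using G by (elim conjE) assumption
  have G5: "\<forall>\<U>\<in>CovX. \<forall>V\<in>OpX. V \<subseteq> \<Union>\<U> \<longrightarrow> (\<lambda>U. V \<inter> U) ` \<U> \<in> CovX" using G by (elim conjE) assumption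
  have G6: "\<forall>\<U>\<in>CovX. \<forall>\<V>. (\<forall>U\<in>\<U>. \<V> U \<in> CovX \<and> \<Union>(\<V> U) = U) \<longrightarrow> \<Union>(\<V> ` \<U>) \<in> CovX" using G by (elim conjE) assumption
  have G7: "\<forall>\<U>\<in>CovX. \<forall>\<V>. \<V> \<subseteq> OpX \<and> \<Union>\<V> = \<Union>\<U> \<and> (\<forall>U\<in>\<U>. \<exists>V\<in>\<V>. U \<subseteq> V) \<longrightarrow> \<V> \<in> CovX" using G by (elim conjE) assumption
  have G8: "\<forall>\<U>\<in>CovX. \<forall>W. W \<subseteq> \<Union>\<U> \<and> (\<forall>U\<in>\<U>. W \<inter> U \<in> OpX) \<longrightarrow> W \<in> OpX" using G by (elim conjE) assumption
  define pre where "pre = (\<lambda>V. \<alpha> -` V \<inter> X)"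
  have preU: "pre (\<Union>\<V>) = \<Union>(pre ` \<V>)" for \<V> by (auto simp: pre_def)
  have CovS': "CovS = {\<V>. \<V> \<subseteq> OpS \<and> pre ` \<V> \<in> CovX}" using CovS_def pre_def by simp
  have OpS': "OpS = {V. openin K V \<and> pre V \<in> OpX}" using OpS_def pre_def by simp
  have A1: "OpS \<subseteq> Pow (topspace K)" using OpS' openin_subset by auto
  have "pre (topspace K) = X" using img by (auto simp: pre_def)
  then have A1b: "{} \<in> OpS" "topspace K \<in> OpS"
    using GE GX by (auto simp: OpS' pre_def)
  have A2: "\<forall>U\<in>OpS. \<forall>V\<in>OpS. U \<union> V \<in> OpS \<and> U \<inter> V \<in> OpS"
  proof (intro ballI conjI)
    fix U V assume "U \<in> OpS" "V \<in> OpS"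
    then have "openin K U" "openin K V" "pre U \<in> OpX" "pre V \<in> OpX" by (auto simp: OpS')
    moreover have "pre (U \<union> V) = pre U \<union> pre V" "pre (U \<inter> V) = pre U \<inter> pre V" by (auto simp: pre_def)
    ultimately show "U \<union> V \<in> OpS" "U \<inter> V \<in> OpS" using G2 by (auto simp: OpS')
  qed
  have A3: "\<forall>\<U>. finite \<U> \<and> \<U> \<subseteq> OpS \<longrightarrow> \<U> \<in> CovS"
  proof (intro allI impI)
    fix \<U> assume "finite \<U> \<and> \<U> \<subseteq> OpS"
    then have "finite (pre ` \<U>)" "pre ` \<U> \<subseteq> OpX" by (auto simp: OpS')
    then show "\<U> \<in> CovS" using G3 \<open>finite \<U> \<and> \<U> \<subseteq> OpS\<close> by (auto simp: CovS')
  qed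
  have A4: "\<forall>\<U>\<in>CovS. \<Union>\<U> \<in> OpS"
  proof
    fix \<U> assume "\<U> \<in> CovS"
    then have "\<U> \<subseteq> OpS" "pre ` \<U> \<in> CovX" by (auto simp: CovS')
    moreover have "openin K (\<Union>\<U>)" using \<open>\<U> \<subseteq> OpS\<close> by (auto simp: OpS')
    ultimately show "\<Union>\<U> \<in> OpS" using G4 preU[of \<U>] by (simp add: OpS')
  qed
  have A5: "\<forall>\<U>\<in>CovS. \<forall>V\<in>OpS. V \<subseteq> \<Union>\<U> \<longrightarrow> (\<lambda>U. V \<inter> U) ` \<U> \<in> CovS"
  proof (intro ballI impI)
    fix \<U> V assume U: "\<U> \<in> CovS" and V: "V \<in> OpS" and sub: "V \<subseteq> \<Union>\<U>"
    then have "\<U> \<subseteq> OpS" "pre ` \<U> \<in> CovX" "pre V \<in> OpX" by (auto simp: CovS' OpS')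
    moreover have "pre V \<subseteq> \<Union>(pre ` \<U>)" using sub by (auto simp: pre_def)
    ultimately have "(\<lambda>W. pre V \<inter> W) ` (pre ` \<U>) \<in> CovX" using G5 by blast
    moreover have "(\<lambda>W. pre V \<inter> W) ` (pre ` \<U>) = pre ` ((\<lambda>U. V \<inter> U) ` \<U>)"
      unfolding image_image by (rule image_cong) (auto simp: pre_def)
    moreover have "(\<lambda>U. V \<inter> U) ` \<U> \<subseteq> OpS" using A2 V \<open>\<U> \<subseteq> OpS\<close> by auto
    ultimately show "(\<lambda>U. V \<inter> U) ` \<U> \<in> CovS" by (auto simp: CovS')
  qed
  have A6: "\<forall>\<U>\<in>CovS. \<forall>\<V>. (\<forall>U\<in>\<U>. \<V> U \<in> CovS \<and> \<Union>(\<V> U) = U) \<longrightarrow> \<Union>(\<V> ` \<U>) \<in> CovS"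
  proof (intro ballI allI impI)
    fix \<U> \<V> assume U: "\<U> \<in> CovS" and V: "\<forall>U\<in>\<U>. \<V> U \<in> CovS \<and> \<Union>(\<V> U) = U"
    then have US: "\<U> \<subseteq> OpS" and UC: "pre ` \<U> \<in> CovX" by (auto simp: CovS')
    define ch where "ch = (\<lambda>W. SOME U. U \<in> \<U> \<and> pre U = W)"
    have ch: "ch W \<in> \<U> \<and> pre (ch W) = W" if "W \<in> pre ` \<U>" for W
      unfolding ch_def by (rule someI_ex) (use that in auto)
    define \<W> where "\<W> = (\<lambda>W. pre ` \<V> (ch W))"
    have "\<forall>W\<in>pre ` \<U>. \<W> W \<in> CovX \<and> \<Union>(\<W> W) = W"
    proof
      fix W assume W: "W \<in> pre ` \<U>"
      then have "\<V> (ch W) \<in> CovS" "\<Union>(\<V> (ch W)) = ch W" using ch V by auto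
      then show "\<W> W \<in> CovX \<and> \<Union>(\<W> W) = W"
        using ch[OF W] preU[of "\<V> (ch W)"] by (auto simp: CovS' \<W>_def)
    qed
    then have C1: "\<Union>(\<W> ` pre ` \<U>) \<in> CovX" using G6 UC by blast
    have VS: "\<Union>(\<V> ` \<U>) \<subseteq> OpS" using V by (auto simp: CovS')
    have "pre ` \<Union>(\<V> ` \<U>) \<in> CovX"
    proof -
      have "pre ` \<Union>(\<V> ` \<U>) \<subseteq> OpX" using VS by (auto simp: OpS')
      moreover have "\<Union>(pre ` \<Union>(\<V> ` \<U>)) = \<Union>(\<Union>(\<W> ` pre ` \<U>))"
      proof -
        have "\<Union>(pre ` \<Union>(\<V> ` \<U>)) = \<Union>(pre ` \<U>)"
          using V by (auto simp: pre_def) blast+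
        moreover have "\<Union>(\<Union>(\<W> ` pre ` \<U>)) = \<Union>(pre ` \<U>)"
        proof -
          have "\<Union>(\<Union>(\<W> ` pre ` \<U>)) = (\<Union>W\<in>pre ` \<U>. \<Union>(\<W> W))" by blast
          also have "\<dots> = (\<Union>W\<in>pre ` \<U>. W)"
            using \<open>\<forall>W\<in>pre ` \<U>. \<W> W \<in> CovX \<and> \<Union>(\<W> W) = W\<close> by (intro SUP_cong) auto
          finally show ?thesis by simp
        qed
        ultimately show ?thesis by simp
      qed
      moreover have "\<forall>U\<in>\<Union>(\<W> ` pre ` \<U>). \<exists>V\<in>pre ` \<Union>(\<V> ` \<U>). U \<subseteq> V"
        using ch by (auto simp: \<W>_def)
      ultimately show ?thesis by (intro G7[rule_format, OF C1] conjI)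
    qed
    then show "\<Union>(\<V> ` \<U>) \<in> CovS" using VS by (auto simp: CovS')
  qed
  have A7: "\<forall>\<U>\<in>CovS. \<forall>\<V>. \<V> \<subseteq> OpS \<and> \<Union>\<V> = \<Union>\<U> \<and> (\<forall>U\<in>\<U>. \<exists>V\<in>\<V>. U \<subseteq> V) \<longrightarrow> \<V> \<in> CovS"
  proof (intro ballI allI impI)
    fix \<U> \<V> assume U: "\<U> \<in> CovS" and V: "\<V> \<subseteq> OpS \<and> \<Union>\<V> = \<Union>\<U> \<and> (\<forall>U\<in>\<U>. \<exists>V\<in>\<V>. U \<subseteq> V)"
    then have UC: "pre ` \<U> \<in> CovX" by (auto simp: CovS')
    have "pre ` \<V> \<subseteq> OpX" using V by (auto simp: OpS')
    moreover have "\<Union>(pre ` \<V>) = \<Union>(pre ` \<U>)" using V preU by metis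
    moreover have "\<forall>U\<in>pre ` \<U>. \<exists>V\<in>pre ` \<V>. U \<subseteq> V"
    proof
      fix W assume "W \<in> pre ` \<U>"
      then obtain U0 where "U0 \<in> \<U>" "W = pre U0" by blast
      then obtain V0 where "V0 \<in> \<V>" "U0 \<subseteq> V0" using V by blast
      then have "pre V0 \<in> pre ` \<V>" "W \<subseteq> pre V0" using \<open>W = pre U0\<close> by (auto simp: pre_def)
      then show "\<exists>V\<in>pre ` \<V>. W \<subseteq> V" by blast
    qed
    ultimately have "pre ` \<V> \<in> CovX" by (intro G7[rule_format, OF UC] conjI)
    then show "\<V> \<in> CovS" using V by (auto simp: CovS')
  qed
  have A8: "\<forall>\<U>\<in>CovS. \<forall>W. W \<subseteq> \<Union>\<U> \<and> (\<forall>U\<in>\<U>. W \<inter> U \<in> OpS) \<longrightarrow> W \<in> OpS"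
  proof (intro ballI allI impI)
    fix \<U> W assume U: "\<U> \<in> CovS" and W: "W \<subseteq> \<Union>\<U> \<and> (\<forall>U\<in>\<U>. W \<inter> U \<in> OpS)"
    then have UC: "pre ` \<U> \<in> CovX" by (auto simp: CovS')
    have "W = \<Union>((\<lambda>U. W \<inter> U) ` \<U>)" using W by blast
    moreover have "openin K (\<Union>((\<lambda>U. W \<inter> U) ` \<U>))" using W by (intro openin_Union) (auto simp: OpS')
    ultimately have oW: "openin K W" by simp
    have "pre W \<subseteq> \<Union>(pre ` \<U>)" using W unfolding pre_def by blast
    moreover have "\<forall>U\<in>pre ` \<U>. pre W \<inter> U \<in> OpX"
    proof
      fix U assume "U \<in> pre ` \<U>"
      then obtain U0 where "U0 \<in> \<U>" "U = pre U0" by auto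
      moreover have "pre W \<inter> pre U0 = pre (W \<inter> U0)" by (auto simp: pre_def)
      ultimately show "pre W \<inter> U \<in> OpX" using W by (auto simp: OpS')
    qed
    ultimately have "pre W \<in> OpX" by (intro G8[rule_format, OF UC] conjI)
    then show "W \<in> OpS" using oW by (auto simp: OpS')
  qed
  have A0: "CovS \<subseteq> Pow OpS" by (auto simp: CovS')
  show ?thesis unfolding gts_def
    by (intro conjI A0 A1 A1b A2 A3 A4 A5 A6 A7 A8)
qed



theorem proposition5p6:
  fixes X :: "'a set" and OpX :: "'a set set" and CovX :: "'a set set set"
    and K :: "'b topology" and \<alpha> :: "'a \<Rightarrow> 'b"
    and OpS :: "'b set set" and CovS :: "'b set set set"
  assumes gtsX: "gts X OpX CovX"
    and comp: "compactification (gts_top OpX) K \<alpha>"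
    and OpS_def: "OpS = {V. openin K V \<and> \<alpha> -` V \<inter> X \<in> OpX}"
    and CovS_def: "CovS = {\<V>. \<V> \<subseteq> OpS \<and> (\<lambda>V. \<alpha> -` V \<inter> X) ` \<V> \<in> CovX}"
  shows "strict_compactification X OpX CovX (topspace K) OpS CovS \<alpha> \<and>
         (Hausdorff_space (topology_generated_by OpS) \<longrightarrow> K = topology_generated_by OpS) \<and>
         (openin K (\<alpha> ` X) \<longrightarrow>
           topological_gts (topspace K - \<alpha> ` X)
             (subspace_Op CovS (topspace K - \<alpha> ` X)) (subspace_Cov CovS (topspace K - \<alpha> ` X)))"
proof -
  note G = gtsX[unfolded gts_def]
  have GOp: "OpX \<subseteq> Pow X" using G by (elim conjE) assumption
  have GX: "X \<in> OpX" using G by (elim conjE) assumption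
  have G3: "\<forall>\<U>. finite \<U> \<and> \<U> \<subseteq> OpX \<longrightarrow> \<U> \<in> CovX" using G by (elim conjE) assumption
  have topX: "topspace (gts_top OpX) = X" unfolding gts_top_def using GOp GX by auto
  have cK: "compact_space K" and emb: "embedding_map (gts_top OpX) K \<alpha>"
    and cl: "K closure_of (\<alpha> ` X) = topspace K"
    using comp topX by (auto simp: compactification_def)
  have hom: "homeomorphic_map (gts_top OpX) (subtopology K (\<alpha> ` X)) \<alpha>"
    using emb topX by (simp add: embedding_map_def)
  have img: "\<alpha> ` X \<subseteq> topspace K"
    using continuous_map_image_subset_topspace[OF homeomorphic_imp_continuous_map[OF hom]] topX by auto
  have inj: "inj_on \<alpha> X" using homeomorphic_imp_injective_map[OF hom] topX by simp
  have gS: "gts (topspace K) OpS CovS" by (rule gtsS[OF gtsX img OpS_def CovS_def])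
  define pre where "pre = (\<lambda>V. \<alpha> -` V \<inter> X)"
  have CovS': "CovS = {\<V>. \<V> \<subseteq> OpS \<and> pre ` \<V> \<in> CovX}" using CovS_def pre_def by simp
  have OpS': "OpS = {V. openin K V \<and> pre V \<in> OpX}" using OpS_def pre_def by simp
  define T where "T = topology_generated_by OpS"
  have preK: "pre (topspace K) = X" using img by (auto simp: pre_def)
  have tKS: "topspace K \<in> OpS" using preK GX by (simp add: OpS')
  have OpSsub: "OpS \<subseteq> Pow (topspace K)" using openin_subset by (auto simp: OpS')
  have topT: "topspace T = topspace K" unfolding T_def using tKS OpSsub by auto
  have contid: "continuous_map K T id" unfolding T_def
  proof (rule continuous_on_generated_topo)
    fix U assume "U \<in> OpS"
    then have "openin K U" by (simp add: OpS')
    then show "openin K (id -` U \<inter> topspace K)" using openin_subset[of K U] by (simp add: Int_absorb2)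
  next
    show "id ` topspace K \<subseteq> \<Union> OpS" using tKS by auto
  qed
  have cT: "compact_space T"
    using image_compactin[OF cK[unfolded compact_space_def] contid] topT
    by (simp add: compact_space_def)
  have clT: "T closure_of (\<alpha> ` X) = topspace K"
  proof
    show "T closure_of (\<alpha> ` X) \<subseteq> topspace K" using closure_of_subset_topspace topT by metis
    show "topspace K \<subseteq> T closure_of (\<alpha> ` X)"
      using continuous_map_image_closure_subset[OF contid, of "\<alpha> ` X"] cl by simp
  qed
  have ex: "\<exists>V. openin K V \<and> \<alpha> ` U = V \<inter> \<alpha> ` X" if U: "U \<in> OpX" for U
  proof -
    have "openin (gts_top OpX) U" unfolding gts_top_def using U by (rule topology_generated_by_Basis)
    moreover have "U \<subseteq> X" using U GOp by auto
    ultimately have "openin (subtopology K (\<alpha> ` X)) (\<alpha> ` U)"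
      using homeomorphic_map_openness[OF hom] topX by simp
    then show ?thesis by (simp add: openin_subtopology)
  qed
  define ch where "ch = (\<lambda>U. SOME V. openin K V \<and> \<alpha> ` U = V \<inter> \<alpha> ` X)"
  have ch: "openin K (ch U) \<and> \<alpha> ` U = ch U \<inter> \<alpha> ` X" if "U \<in> OpX" for U
    unfolding ch_def by (rule someI_ex) (rule ex[OF that])
  have prech: "pre (ch U) = U" if U: "U \<in> OpX" for U
  proof
    have UX: "U \<subseteq> X" using U GOp by auto
    show "pre (ch U) \<subseteq> U"
    proof
      fix x assume "x \<in> pre (ch U)"
      then have x: "x \<in> X" "\<alpha> x \<in> ch U" by (auto simp: pre_def)
      then have "\<alpha> x \<in> \<alpha> ` U" using ch[OF U] by auto
      then obtain y where "y \<in> U" "\<alpha> x = \<alpha> y" by auto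
      then show "x \<in> U" using inj x UX by (metis inj_onD subsetD)
    qed
    show "U \<subseteq> pre (ch U)" using ch[OF U] UX by (auto simp: pre_def)
  qed
  have chS: "ch U \<in> OpS" if "U \<in> OpX" for U using ch[OF that] prech[OF that] that by (simp add: OpS')
  have third: "(\<lambda>\<U>. (\<lambda>U. \<alpha> ` U) ` \<U>) ` CovX \<subseteq> cap2 CovS (\<alpha> ` X)"
  proof
    fix \<A> assume "\<A> \<in> (\<lambda>\<U>. (\<lambda>U. \<alpha> ` U) ` \<U>) ` CovX"
    then obtain \<U> where U: "\<U> \<in> CovX" and A: "\<A> = (\<lambda>U. \<alpha> ` U) ` \<U>" by blast
    have UO: "\<U> \<subseteq> OpX" using U G by (elim conjE) blast
    have "pre ` ch ` \<U> = \<U>" unfolding image_image using prech UO by (simp add: subset_eq)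
    then have inC: "ch ` \<U> \<in> CovS" using U chS UO by (auto simp: CovS')
    have "(\<lambda>V. \<alpha> ` X \<inter> V) ` ch ` \<U> = \<A>"
      unfolding A image_image using ch UO by (intro image_cong refl) (metis Int_commute subsetD)
    then show "\<A> \<in> cap2 CovS (\<alpha> ` X)" unfolding cap2_def using inC by blast
  qed
  have P1: "strict_compactification X OpX CovX (topspace K) OpS CovS \<alpha>"
    unfolding strict_compactification_def strict_embedding_def strictly_continuous_def
      topologically_compact_def gts_top_def
    using gS cT clT img inj third by (auto simp: T_def CovS_def)
  have P2: "Hausdorff_space T \<longrightarrow> K = T"
  proof
    assume H: "Hausdorff_space T"
    show "K = T" unfolding topology_eq
    proof (intro allI iffI)
      fix U assume oU: "openin T U"
      then have "openin K {x \<in> topspace K. id x \<in> U}" by (rule openin_continuous_map_preimage[OF contid])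
      moreover have "{x \<in> topspace K. id x \<in> U} = U" using openin_subset[OF oU] topT by auto
      ultimately show "openin K U" by simp
    next
      fix U assume oU: "openin K U"
      then have "closedin K (topspace K - U)" by (simp add: closedin_diff)
      then have "compactin K (topspace K - U)" using cK closedin_compact_space by blast
      then have "compactin T (id ` (topspace K - U))" using image_compactin contid by blast
      then have "closedin T (topspace T - U)" using compactin_imp_closedin[OF H] topT by simp
      then show "openin T U" using openin_subset[OF oU] topT by (simp add: openin_closedin_eq)
    qed
  qed
  have P3: "topological_gts (topspace K - \<alpha> ` X)
             (subspace_Op CovS (topspace K - \<alpha> ` X)) (subspace_Cov CovS (topspace K - \<alpha> ` X))"
    if oX: "openin K (\<alpha> ` X)"
  proof -
    define Y where "Y = topspace K - \<alpha> ` X"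
    define Tr where "Tr = {A. openin (subtopology K Y) A}"
    have cap: "cap2 CovS Y = Pow Tr"
    proof
      show "cap2 CovS Y \<subseteq> Pow Tr"
      proof
        fix \<A> assume "\<A> \<in> cap2 CovS Y"
        then obtain \<V> where V: "\<V> \<in> CovS" "\<A> = (\<lambda>U. Y \<inter> U) ` \<V>" unfolding cap2_def by blast
        then have "\<forall>U\<in>\<V>. openin K U" by (auto simp: CovS' OpS')
        then show "\<A> \<in> Pow Tr" using V(2) by (auto simp: Tr_def openin_subtopology)
      qed
      show "Pow Tr \<subseteq> cap2 CovS Y"
      proof
        fix \<A> assume A: "\<A> \<in> Pow Tr"
        define W where "W = (\<lambda>A. SOME W. openin K W \<and> A = W \<inter> Y)"
        have W: "openin K (W A) \<and> A = W A \<inter> Y" if "A \<in> \<A>" for A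
          unfolding W_def by (rule someI_ex) (use A that in \<open>auto simp: Tr_def openin_subtopology\<close>)
        define \<V> where "\<V> = (\<lambda>A. W A \<union> \<alpha> ` X) ` \<A>"
        have VS: "\<V> \<subseteq> OpS"
        proof
          fix V assume "V \<in> \<V>"
          then obtain A where A: "A \<in> \<A>" "V = W A \<union> \<alpha> ` X" by (auto simp: \<V>_def)
          then have "openin K V" using W oX by auto
          moreover have "pre V = X" using A by (auto simp: pre_def)
          ultimately show "V \<in> OpS" using GX by (simp add: OpS')
        qed
        have "pre ` \<V> \<subseteq> {X}" by (auto simp: \<V>_def pre_def)
        then have "finite (pre ` \<V>)" "pre ` \<V> \<subseteq> OpX" using GX finite_subset by auto
        then have "pre ` \<V> \<in> CovX" using G3 by blast
        then have VC: "\<V> \<in> CovS" using VS by (simp add: CovS')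
        have "(\<lambda>U. Y \<inter> U) ` \<V> = \<A>"
        proof -
          have e: "Y \<inter> (W A \<union> \<alpha> ` X) = id A" if "A \<in> \<A>" for A
          proof -
            have "Y \<inter> \<alpha> ` X = {}" by (auto simp: Y_def)
            then show ?thesis using W[OF that] by auto
          qed
          show ?thesis unfolding \<V>_def image_image using image_cong[OF refl e, of \<A>] by simp
        qed
        then show "\<A> \<in> cap2 CovS Y" unfolding cap2_def using VC by blast
      qed
    qed
    have TrY: "Tr \<subseteq> Pow Y" using openin_subset by (fastforce simp: Tr_def)
    have gY: "gts Y Tr (Pow Tr)"
      unfolding gts_def
    proof (intro conjI ballI allI impI)
      show "Tr \<subseteq> Pow Y" by (rule TrY)
      show "Pow Tr \<subseteq> Pow Tr" by simp
      show "{} \<in> Tr" by (simp add: Tr_def)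
      show "Y \<in> Tr" using openin_topspace[of "subtopology K Y"] by (simp add: Tr_def Y_def Int_absorb1)
    next
      fix U V assume "U \<in> Tr" "V \<in> Tr"
      then show "U \<union> V \<in> Tr" "U \<inter> V \<in> Tr" by (auto simp: Tr_def)
    next
      fix \<U> assume "\<U> \<in> Pow Tr" then show "\<Union>\<U> \<in> Tr" by (auto simp: Tr_def)
    next
      fix \<U> assume "finite \<U> \<and> \<U> \<subseteq> Tr" then show "\<U> \<in> Pow Tr" by simp
    next
      fix \<U> V assume "\<U> \<in> Pow Tr" "V \<in> Tr" 
      then show "(\<lambda>U. V \<inter> U) ` \<U> \<in> Pow Tr" by (auto simp: Tr_def)
    next
      fix \<U> \<V> assume "\<U> \<in> Pow Tr" "\<forall>U\<in>\<U>. \<V> U \<in> Pow Tr \<and> \<Union>(\<V> U) = U"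
      then show "\<Union>(\<V> ` \<U>) \<in> Pow Tr" by blast
    next
      fix \<U> \<V> assume "\<V> \<subseteq> Tr \<and> \<Union>\<V> = \<Union>\<U> \<and> (\<forall>U\<in>\<U>. \<exists>V\<in>\<V>. U \<subseteq> V)"
      then show "\<V> \<in> Pow Tr" by simp
    next
      fix \<U> W assume U: "\<U> \<in> Pow Tr" and W: "W \<subseteq> \<Union>\<U> \<and> (\<forall>U\<in>\<U>. W \<inter> U \<in> Tr)"
      have "W = \<Union>((\<lambda>U. W \<inter> U) ` \<U>)" using W by blast
      moreover have "openin (subtopology K Y) (\<Union>((\<lambda>U. W \<inter> U) ` \<U>))"
        using W by (intro openin_Union) (auto simp: Tr_def)
      ultimately show "W \<in> Tr" by (simp add: Tr_def)
    qed
    have UTr: "\<Union>(Pow Tr) = Tr" by simp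
    have gen: "gen_topology_generated Y (cap2 CovS Y) = Pow Tr"
    proof
      show "gen_topology_generated Y (cap2 CovS Y) \<subseteq> Pow Tr"
        unfolding gen_topology_generated_def gen_topology_in_def cap
        by (rule Inter_lower) (use gY UTr in simp)
      show "Pow Tr \<subseteq> gen_topology_generated Y (cap2 CovS Y)"
        unfolding gen_topology_generated_def cap by (rule Inter_greatest) blast
    qed
    show ?thesis
      unfolding Y_def[symmetric] topological_gts_def subspace_Op_def subspace_Cov_def gen UTr
      using gY by simp
  qed
  show ?thesis using P1 P2 P3 by (simp add: T_def)
qed

end
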